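(* Let $R$ be a Noetherian ring, let $N=Ry_1+\cdots+Ry_n$ be an $R$-module, and let $x,y\in N$. Write $Y_i=N/Ry_i$ and $Y=N/Ry$. (1) If $\operatorname{ht}(N^*(x)/Y^*(x))>1$, then $N^*(y)\subseteq\sqrt{N^*(x)}$. (2) If $\operatorname{ht}(N^*(x)/Y_i^*(x))>1$ for $1\le i\le n$, then $\sqrt{\operatorname{tr}(N)}=\sqrt{N^*(x)}$. In particular $\operatorname{ht}(\operatorname{tr}(N))\le\mu(N^* )$, unless $\operatorname{tr}(N)=R$.
   Context: For an $R$-module $X$ and $z\in X$, $X^*(z)=\{f(z)\mid f\in\operatorname{Hom}_R(X,R)\}$; $Y^*(x)$ denotes the order ideal of the image of $x$ in $Y$ (which is contained in $N^*(x)$). For ideals $I\subseteq J$, $\operatorname{ht}(J/I)$ is the height of $J/I$ in $R/I$. $\operatorname{tr}(N)=\sum_{z\in N}N^*(z)$ is the trace ideal; $N^*=\operatorname{Hom}_R(N,R)$ and $\mu$ is the minimal number of generators. *)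

theory Defs
  imports Main "HOL-Library.Extended_Nat"
begin

definition is_ideal :: "'a::comm_ring_1 set \<Rightarrow> bool" where
  "is_ideal I \<longleftrightarrow> module.subspace ((*) :: 'a \<Rightarrow> 'a \<Rightarrow> 'a) I"

definition ideal_gen :: "'a::comm_ring_1 set \<Rightarrow> 'a set" where
  "ideal_gen S = module.span ((*) :: 'a \<Rightarrow> 'a \<Rightarrow> 'a) S"

definition noetherian_ring :: "'a::comm_ring_1 itself \<Rightarrow> bool" where
  "noetherian_ring _ \<longleftrightarrow> (\<forall>I::'a set. is_ideal I \<longrightarrow> (\<exists>S. finite S \<and> I = ideal_gen S))"

definition prime_ideal :: "'a::comm_ring_1 set \<Rightarrow> bool" where
  "prime_ideal P \<longleftrightarrow> is_ideal P \<and> P \<noteq> UNIV \<and> (\<forall>a b. a * b \<in> P \<longrightarrow> a \<in> P \<or> b \<in> P)"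

definition radical :: "'a::comm_ring_1 set \<Rightarrow> 'a set" where
  "radical I = {r. \<exists>k::nat. r ^ k \<in> I}"

text \<open>Height of the prime P/I in R/I (P a prime containing I): supremum of the lengths
 of chains of primes of R/I ending in P/I, i.e. chains of primes of R containing I.\<close>
definition prime_height_mod :: "'a::comm_ring_1 set \<Rightarrow> 'a set \<Rightarrow> enat" where
  "prime_height_mod I P = Sup {enat k | k. \<exists>c :: nat \<Rightarrow> 'a set.
      (\<forall>i\<le>k. prime_ideal (c i) \<and> I \<subseteq> c i) \<and> (\<forall>i<k. c i \<subset> c (Suc i)) \<and> c k = P}"

text \<open>ht(J/I): height of the ideal J/I in R/I, the infimum of the heights of the primes of
 R/I containing it (infinity if there are none, i.e. J/I = R/I).\<close>
definition height_mod :: "'a::comm_ring_1 set \<Rightarrow> 'a set \<Rightarrow> enat" where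
  "height_mod I J = Inf {prime_height_mod I P | P. prime_ideal P \<and> I \<subseteq> P \<and> J \<subseteq> P}"

definition height :: "'a::comm_ring_1 set \<Rightarrow> enat" where
  "height J = height_mod {0} J"

definition dual :: "('a::comm_ring_1 \<Rightarrow> 'm::ab_group_add \<Rightarrow> 'm) \<Rightarrow> ('m \<Rightarrow> 'a) set" where
  "dual scale = {f. module_hom scale ((*) :: 'a \<Rightarrow> 'a \<Rightarrow> 'a) f}"

definition order_ideal :: "('a::comm_ring_1 \<Rightarrow> 'm::ab_group_add \<Rightarrow> 'm) \<Rightarrow> 'm \<Rightarrow> 'a set" where
  "order_ideal scale z = {f z | f. f \<in> dual scale}"

text \<open>Order ideal of the image of z in N/Rw: by the universal property of the quotient,
 Hom_R(N/Rw, R) is identified with the linear forms on N vanishing at w.\<close>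
definition quot_order_ideal :: "('a::comm_ring_1 \<Rightarrow> 'm::ab_group_add \<Rightarrow> 'm) \<Rightarrow> 'm \<Rightarrow> 'm \<Rightarrow> 'a set" where
  "quot_order_ideal scale w z = {f z | f. f \<in> dual scale \<and> f w = 0}"

definition trace_ideal :: "('a::comm_ring_1 \<Rightarrow> 'm::ab_group_add \<Rightarrow> 'm) \<Rightarrow> 'a set" where
  "trace_ideal scale = ideal_gen (\<Union>z. order_ideal scale z)"

definition mu_dual :: "('a::comm_ring_1 \<Rightarrow> 'm::ab_group_add \<Rightarrow> 'm) \<Rightarrow> enat" where
  "mu_dual scale = Inf {enat k | k. \<exists>fs :: nat \<Rightarrow> 'm \<Rightarrow> 'a.
      (\<forall>i<k. fs i \<in> dual scale) \<and>
      (\<forall>g \<in> dual scale. \<exists>r :: nat \<Rightarrow> 'a. g = (\<lambda>z. \<Sum>i<k. r i * fs i z))}"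

end

theory Submission
  imports Defs
begin

lemma mult_module: "module ((*) :: 'a::comm_ring_1 \<Rightarrow> 'a \<Rightarrow> 'a)"
  by unfold_locales (auto simp: algebra_simps)

lemma is_ideal_iff: "is_ideal (I::'a::comm_ring_1 set) \<longleftrightarrow>
   0 \<in> I \<and> (\<forall>x\<in>I. \<forall>y\<in>I. x + y \<in> I) \<and> (\<forall>r. \<forall>x\<in>I. r * x \<in> I)"
  unfolding is_ideal_def module.subspace_def[OF mult_module] by auto

lemma idealI:
  assumes "(0::'a::comm_ring_1) \<in> I" "\<And>x y. x \<in> I \<Longrightarrow> y \<in> I \<Longrightarrow> x + y \<in> I"
    "\<And>r x. x \<in> I \<Longrightarrow> r * x \<in> I"
  shows "is_ideal I"
  using assms unfolding is_ideal_iff by auto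

context fixes I :: "'a::comm_ring_1 set" assumes I: "is_ideal I"
begin
lemma ideal_0: "0 \<in> I" using I unfolding is_ideal_iff by auto
lemma ideal_add: "x \<in> I \<Longrightarrow> y \<in> I \<Longrightarrow> x + y \<in> I" using I unfolding is_ideal_iff by auto
lemma ideal_mult: "x \<in> I \<Longrightarrow> r * x \<in> I" using I unfolding is_ideal_iff by auto
lemma ideal_mult2: "x \<in> I \<Longrightarrow> x * r \<in> I" using ideal_mult[of x r] by (simp add: mult.commute)
lemma ideal_neg: "x \<in> I \<Longrightarrow> - x \<in> I" using ideal_mult[of x "-1"] by simp
lemma ideal_diff: "x \<in> I \<Longrightarrow> y \<in> I \<Longrightarrow> x - y \<in> I"
  using ideal_add[of x "-y"] ideal_neg[of y] by simp
lemma ideal_sum: "(\<And>i. i \<in> A \<Longrightarrow> f i \<in> I) \<Longrightarrow> sum f A \<in> I"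
  by (induction A rule: infinite_finite_induct) (auto intro: ideal_0 ideal_add)
lemma ideal_UNIV: "1 \<in> I \<Longrightarrow> I = UNIV"
  using ideal_mult[of 1] by auto
lemma ideal_diff_iff: "y \<in> I \<Longrightarrow> x - y \<in> I \<longleftrightarrow> x \<in> I"
  using ideal_add[of "x - y" y] ideal_diff[of x y] by auto
end

lemma gen_ideal: "is_ideal (ideal_gen (S::'a::comm_ring_1 set))"
  unfolding is_ideal_def ideal_gen_def using module.subspace_span[OF mult_module] by blast
lemma gen_sup: "(S::'a::comm_ring_1 set) \<subseteq> ideal_gen S"
  unfolding ideal_gen_def using module.span_superset[OF mult_module] by blast
lemma gen_min: "is_ideal I \<Longrightarrow> (S::'a::comm_ring_1 set) \<subseteq> I \<Longrightarrow> ideal_gen S \<subseteq> I"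
  unfolding ideal_gen_def is_ideal_def using module.span_minimal[OF mult_module] by blast
lemma gen_mono: "(S::'a::comm_ring_1 set) \<subseteq> T \<Longrightarrow> ideal_gen S \<subseteq> ideal_gen T"
  using gen_min[OF gen_ideal] gen_sup by blast
lemma gen_id: "is_ideal (I::'a::comm_ring_1 set) \<Longrightarrow> ideal_gen I = I"
  using gen_min gen_sup by blast
lemma gen_insert: "ideal_gen (insert a (S::'a::comm_ring_1 set)) = {x. \<exists>k. x - k * a \<in> ideal_gen S}"
  unfolding ideal_gen_def using module.span_insert[OF mult_module] by metis
lemma gen_empty: "ideal_gen ({}::'a::comm_ring_1 set) = {0}"
  unfolding ideal_gen_def using module.span_empty[OF mult_module] by metis
lemma ideal_UNIV_is: "is_ideal (UNIV::'a::comm_ring_1 set)" by (rule idealI) auto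
lemma ideal_zero_is: "is_ideal ({0}::'a::comm_ring_1 set)" by (rule idealI) auto

lemma ideal_Inter: "(\<And>I. I \<in> F \<Longrightarrow> is_ideal (I::'a::comm_ring_1 set)) \<Longrightarrow> is_ideal (\<Inter>F)"
  by (rule idealI) (auto intro: ideal_0 ideal_add ideal_mult)
lemma ideal_Int: "is_ideal (I::'a::comm_ring_1 set) \<Longrightarrow> is_ideal J \<Longrightarrow> is_ideal (I \<inter> J)"
  by (rule idealI) (auto intro: ideal_0 ideal_add ideal_mult)

definition addel :: "'a::comm_ring_1 set \<Rightarrow> 'a \<Rightarrow> 'a set" where
  "addel I a = {i + r * a | i r. i \<in> I}"

lemma addel_ideal: assumes "is_ideal I" shows "is_ideal (addel I a)"
proof (rule idealI)
  show "0 \<in> addel I a" unfolding addel_def using ideal_0[OF assms]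
    by (intro CollectI exI[of _ 0] exI[of _ 0]) simp
next
  fix x y assume "x \<in> addel I a" "y \<in> addel I a"
  then obtain i r j s where "i \<in> I" "j \<in> I" "x = i + r * a" "y = j + s * a" unfolding addel_def by auto
  then show "x + y \<in> addel I a" unfolding addel_def
    by (intro CollectI exI[of _ "i + j"] exI[of _ "r + s"]) (auto simp: algebra_simps intro: ideal_add[OF assms])
next
  fix c x assume "x \<in> addel I a"
  then obtain i r where "i \<in> I" "x = i + r * a" unfolding addel_def by auto
  then show "c * x \<in> addel I a" unfolding addel_def
    by (intro CollectI exI[of _ "c * i"] exI[of _ "c * r"]) (auto simp: algebra_simps intro: ideal_mult[OF assms])
qed

lemma addel_sup: "I \<subseteq> addel I a"
proof
  fix x assume "x \<in> I" then show "x \<in> addel I a" unfolding addel_def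
    by (intro CollectI exI[of _ x] exI[of _ 0]) simp
qed
lemma addel_el: "is_ideal I \<Longrightarrow> a \<in> addel I a"
  unfolding addel_def using ideal_0 by (intro CollectI exI[of _ 0] exI[of _ 1]) simp
lemma addel_min: "is_ideal J \<Longrightarrow> I \<subseteq> J \<Longrightarrow> a \<in> J \<Longrightarrow> addel I a \<subseteq> J"
  unfolding addel_def by (auto intro: ideal_add ideal_mult)

definition isum :: "'a::comm_ring_1 set \<Rightarrow> 'a set \<Rightarrow> 'a set" where
  "isum I J = {i + j | i j. i \<in> I \<and> j \<in> J}"

lemma isum_ideal: assumes "is_ideal I" "is_ideal J" shows "is_ideal (isum I J)"
proof (rule idealI)
  show "0 \<in> isum I J" unfolding isum_def using ideal_0 assms by force
next
  fix x y assume "x \<in> isum I J" "y \<in> isum I J"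
  then obtain i r j s where "i \<in> I" "j \<in> I" "r \<in> J" "s \<in> J" "x = i + r" "y = j + s" unfolding isum_def by auto
  then show "x + y \<in> isum I J" unfolding isum_def
    by (intro CollectI exI[of _ "i + j"] exI[of _ "r + s"]) (auto simp: algebra_simps intro: ideal_add assms)
next
  fix c x assume "x \<in> isum I J"
  then obtain i r where "i \<in> I" "r \<in> J" "x = i + r" unfolding isum_def by auto
  then show "c * x \<in> isum I J" unfolding isum_def
    by (intro CollectI exI[of _ "c * i"] exI[of _ "c * r"]) (auto simp: algebra_simps intro: ideal_mult assms)
qed
lemma isum_sup1: "is_ideal J \<Longrightarrow> I \<subseteq> isum I J"
  unfolding isum_def using ideal_0 by force
lemma isum_sup2: "is_ideal I \<Longrightarrow> J \<subseteq> isum I J"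
  unfolding isum_def using ideal_0 by force
lemma isum_min: "is_ideal K \<Longrightarrow> I \<subseteq> K \<Longrightarrow> J \<subseteq> K \<Longrightarrow> isum I J \<subseteq> K"
  unfolding isum_def by (auto intro: ideal_add)

lemma prime_is_ideal: "prime_ideal P \<Longrightarrow> is_ideal P" unfolding prime_ideal_def by auto
lemma prime_one: "prime_ideal P \<Longrightarrow> 1 \<notin> P"
  unfolding prime_ideal_def using ideal_UNIV by blast
lemma prime_mult: "prime_ideal P \<Longrightarrow> a * b \<in> P \<Longrightarrow> a \<in> P \<or> b \<in> P"
  unfolding prime_ideal_def by blast
lemma prime_mult_out: "prime_ideal P \<Longrightarrow> a \<notin> P \<Longrightarrow> b \<notin> P \<Longrightarrow> a * b \<notin> P"
  unfolding prime_ideal_def by blast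
lemma prime_power: "prime_ideal P \<Longrightarrow> a ^ n \<in> P \<Longrightarrow> a \<in> P"
  by (induction n) (auto simp: prime_one dest: prime_mult)

definition sat :: "'a::comm_ring_1 set \<Rightarrow> 'a set \<Rightarrow> 'a set" where
  "sat T I = {r. \<exists>s. s \<notin> T \<and> s * r \<in> I}"

context fixes T :: "'a::comm_ring_1 set" assumes T: "prime_ideal T"
begin
lemma sat_ideal: assumes "is_ideal I" shows "is_ideal (sat T I)"
proof (rule idealI)
  show "0 \<in> sat T I" unfolding sat_def using ideal_0[OF assms] prime_one[OF T] by force
next
  fix x y assume "x \<in> sat T I" "y \<in> sat T I"
  then obtain s t where st: "s \<notin> T" "t \<notin> T" "s * x \<in> I" "t * y \<in> I" unfolding sat_def by auto
  have "(s * t) * (x + y) = t * (s * x) + s * (t * y)" by (simp add: algebra_simps)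
  also have "\<dots> \<in> I" using st by (meson ideal_add ideal_mult assms)
  finally have "(s * t) * (x + y) \<in> I" .
  then show "x + y \<in> sat T I" unfolding sat_def using prime_mult_out[OF T st(1,2)] by blast
next
  fix c x assume "x \<in> sat T I"
  then obtain s where st: "s \<notin> T" "s * x \<in> I" unfolding sat_def by auto
  have "s * (c * x) = c * (s * x)" by (simp add: algebra_simps)
  then show "c * x \<in> sat T I" unfolding sat_def using st ideal_mult[OF assms st(2), of c]
    by (intro CollectI exI[of _ s]) (simp add: mult.left_commute)
qed
lemma sat_sup: "I \<subseteq> sat T I" unfolding sat_def using prime_one[OF T] by force
lemma sat_mono: "I \<subseteq> J \<Longrightarrow> sat T I \<subseteq> sat T J" unfolding sat_def by blast
lemma sat_sat: "sat T (sat T I) = sat T I"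
proof
  show "sat T (sat T I) \<subseteq> sat T I"
  proof
    fix x assume "x \<in> sat T (sat T I)"
    then obtain s t where "s \<notin> T" "t \<notin> T" "t * (s * x) \<in> I" unfolding sat_def by auto
    then show "x \<in> sat T I" unfolding sat_def using prime_mult_out[OF T, of t s]
      by (intro CollectI exI[of _ "t * s"]) (simp add: mult.assoc)
  qed
qed (rule sat_sup)
lemma sat_el: "s \<notin> T \<Longrightarrow> s * x \<in> I \<Longrightarrow> x \<in> sat T I" unfolding sat_def by blast
lemma sat_elD: "x \<in> sat T I \<Longrightarrow> \<exists>s. s \<notin> T \<and> s * x \<in> I" unfolding sat_def by blast
lemma sat_in_prime: "prime_ideal Q \<Longrightarrow> I \<subseteq> Q \<Longrightarrow> Q \<subseteq> T \<Longrightarrow> sat T I \<subseteq> Q"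
  unfolding sat_def using prime_mult by blast
lemma sat_min: "is_ideal J \<Longrightarrow> I \<subseteq> J \<Longrightarrow> sat T J = J \<Longrightarrow> sat T I \<subseteq> J"
  using sat_mono by blast
end

lemma noeth_max:
  assumes N: "noetherian_ring TYPE('a::comm_ring_1)" and ne: "F \<noteq> {}"
    and id: "\<And>I. I \<in> F \<Longrightarrow> is_ideal (I::'a set)"
  shows "\<exists>M\<in>F. \<forall>I\<in>F. M \<subseteq> I \<longrightarrow> I = M"
proof (rule Zorn_Lemma2, intro ballI)
  fix C assume C: "C \<in> chains F"
  have CF: "C \<subseteq> F" using C unfolding chains_def by blast
  show "\<exists>U\<in>F. \<forall>X\<in>C. X \<subseteq> U"
  proof (cases "C = {}")
    case True then show ?thesis using ne by auto
  next
    case False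
    have idU: "is_ideal (\<Union>C)"
    proof (rule idealI)
      show "0 \<in> \<Union>C" using False CF id ideal_0 by blast
    next
      fix x y assume "x \<in> \<Union>C" "y \<in> \<Union>C"
      then obtain X Y where XY: "X \<in> C" "Y \<in> C" "x \<in> X" "y \<in> Y" by auto
      from C XY(1,2) have "X \<subseteq> Y \<or> Y \<subseteq> X" by (rule chainsD)
      then show "x + y \<in> \<Union>C"
      proof
        assume "X \<subseteq> Y" then show ?thesis using XY CF id[of Y] ideal_add[of Y x y] by blast
      next
        assume "Y \<subseteq> X" then show ?thesis using XY CF id[of X] ideal_add[of X x y] by blast
      qed
    next
      fix r x assume "x \<in> \<Union>C" then show "r * x \<in> \<Union>C" using CF id ideal_mult by blast
    qed
    obtain S where S: "finite S" "\<Union>C = ideal_gen S" using N idU unfolding noetherian_ring_def by blast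
    have "S \<subseteq> \<Union>C" using S gen_sup by blast
    moreover have "subset.chain F C" using C by (simp add: chains_alt_def)
    ultimately obtain B where B: "B \<in> C" "S \<subseteq> B"
      using finite_subset_Union_chain[OF S(1) _ False] by blast
    have "\<Union>C \<subseteq> B" using S(2) gen_min[OF id[of B] B(2)] B(1) CF by auto
    then show ?thesis using B CF by blast
  qed
qed

lemma prime_avoid:
  assumes N: "noetherian_ring TYPE('a::comm_ring_1)" and K: "is_ideal (K::'a set)"
    and M1: "1 \<in> M" and Mm: "\<And>a b. a \<in> M \<Longrightarrow> b \<in> M \<Longrightarrow> a * b \<in> M" and KM: "K \<inter> M = {}"
  shows "\<exists>P. prime_ideal P \<and> K \<subseteq> P \<and> P \<inter> M = {}"
proof -
  let ?F = "{I. is_ideal I \<and> K \<subseteq> I \<and> I \<inter> M = {}}"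
  have "K \<in> ?F" using K KM by blast
  then obtain P where P: "P \<in> ?F" and max: "\<forall>I\<in>?F. P \<subseteq> I \<longrightarrow> I = P"
    using noeth_max[OF N, of ?F] by blast
  have idP: "is_ideal P" using P by blast
  have meet: "\<exists>i r. i \<in> P \<and> i + r * a \<in> M" if a: "a \<notin> P" for a
  proof -
    have "addel P a \<noteq> P" using addel_el[OF idP, of a] a by blast
    then have "addel P a \<notin> ?F" using max addel_sup[of P a] by blast
    then have "addel P a \<inter> M \<noteq> {}" using addel_ideal[OF idP] addel_sup[of P a] P by blast
    then show ?thesis unfolding addel_def by blast
  qed
  have "prime_ideal P" unfolding prime_ideal_def
  proof (intro conjI allI impI)
    show "is_ideal P" by fact
    show "P \<noteq> UNIV" using P M1 by blast
  next
    fix a b assume ab: "a * b \<in> P"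
    show "a \<in> P \<or> b \<in> P"
    proof (rule ccontr)
      assume "\<not> ?thesis"
      then obtain i1 r1 i2 r2 where i: "i1 \<in> P" "i2 \<in> P" "i1 + r1 * a \<in> M" "i2 + r2 * b \<in> M"
        using meet by meson
      have "(i1 + r1 * a) * (i2 + r2 * b) = i1 * (i2 + r2 * b) + i2 * (r1 * a) + (r1 * r2) * (a * b)"
        by (simp add: algebra_simps)
      also have "\<dots> \<in> P" using i ab by (meson idP ideal_add ideal_mult ideal_mult2)
      finally show False using Mm[OF i(3,4)] P by blast
    qed
  qed
  then show ?thesis using P by blast
qed

lemma prime_Inter_chain:
  assumes "D \<noteq> {}" "\<And>T. T \<in> D \<Longrightarrow> prime_ideal (T::'a::comm_ring_1 set)" "chain\<^sub>\<subseteq> D"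
  shows "prime_ideal (\<Inter>D)"
  unfolding prime_ideal_def
proof (intro conjI allI impI)
  show "is_ideal (\<Inter>D)" using assms(2) by (intro ideal_Inter) (simp add: prime_is_ideal)
  show "\<Inter>D \<noteq> UNIV" using assms(1,2) prime_one by blast
  fix a b assume ab: "a * b \<in> \<Inter>D"
  show "a \<in> \<Inter>D \<or> b \<in> \<Inter>D"
  proof (rule ccontr)
    assume "\<not> ?thesis"
    then obtain T1 T2 where T: "T1 \<in> D" "T2 \<in> D" "a \<notin> T1" "b \<notin> T2" by blast
    from assms(3) T(1,2) have "T1 \<subseteq> T2 \<or> T2 \<subseteq> T1" unfolding chain_subset_def by blast
    then show False
    proof
      assume "T1 \<subseteq> T2" then show False using T ab prime_mult[OF assms(2)[of T1], of a b] by blast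
    next
      assume "T2 \<subseteq> T1" then show False using T ab prime_mult[OF assms(2)[of T2], of a b] by blast
    qed
  qed
qed

definition minover :: "'a::comm_ring_1 set \<Rightarrow> 'a set \<Rightarrow> bool" where
  "minover K P \<longleftrightarrow> prime_ideal P \<and> K \<subseteq> P \<and> (\<forall>T. prime_ideal T \<longrightarrow> K \<subseteq> T \<longrightarrow> T \<subseteq> P \<longrightarrow> T = P)"

lemma min_prime_below:
  assumes P: "prime_ideal P" and KP: "(K::'a::comm_ring_1 set) \<subseteq> P"
  shows "\<exists>Q. minover K Q \<and> Q \<subseteq> P"
proof -
  let ?B = "{T. prime_ideal T \<and> K \<subseteq> T \<and> T \<subseteq> P}"
  let ?A = "uminus ` ?B"
  have "\<exists>M\<in>?A. \<forall>X\<in>?A. M \<subseteq> X \<longrightarrow> X = M"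
  proof (rule Zorn_Lemma2, intro ballI)
    fix C assume C: "C \<in> chains ?A"
    show "\<exists>U\<in>?A. \<forall>X\<in>C. X \<subseteq> U"
    proof (cases "C = {}")
      case True then show ?thesis using P KP by blast
    next
      case False
      let ?D = "uminus ` C"
      have DB: "?D \<subseteq> ?B" using C unfolding chains_def by auto
      have "chain\<^sub>\<subseteq> ?D" using C unfolding chains_def chain_subset_def by blast
      then have pr: "prime_ideal (\<Inter>?D)" using prime_Inter_chain[of ?D] False DB by blast
      have "\<Inter>?D \<in> ?B" using pr DB False by blast
      then have "- \<Inter>?D \<in> ?A" by blast
      moreover have "\<forall>X\<in>C. X \<subseteq> - \<Inter>?D" by auto
      ultimately show ?thesis by blast
    qed
  qed
  then obtain Q where Q: "Q \<in> ?B" and max: "\<forall>X\<in>?A. - Q \<subseteq> X \<longrightarrow> X = - Q" by blast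
  have "minover K Q" unfolding minover_def
  proof (intro conjI allI impI)
    show "prime_ideal Q" "K \<subseteq> Q" using Q by auto
    fix T assume T: "prime_ideal T" "K \<subseteq> T" "T \<subseteq> Q"
    then have "- T \<in> ?A" using Q by blast
    moreover have "- Q \<subseteq> - T" using T by blast
    ultimately show "T = Q" using max by blast
  qed
  then show ?thesis using Q by blast
qed

lemma radical_sub_prime: "prime_ideal P \<Longrightarrow> I \<subseteq> P \<Longrightarrow> radical I \<subseteq> P"
  unfolding radical_def using prime_power by blast

lemma radical_sup: "I \<subseteq> radical I"
  unfolding radical_def by (force intro: exI[of _ 1])

lemma not_radical_prime:
  assumes N: "noetherian_ring TYPE('a::comm_ring_1)" and I: "is_ideal (I::'a set)" and x: "x \<notin> radical I"
  shows "\<exists>P. prime_ideal P \<and> I \<subseteq> P \<and> x \<notin> P"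
proof -
  have "\<exists>P. prime_ideal P \<and> I \<subseteq> P \<and> P \<inter> range (\<lambda>k. x ^ k) = {}"
  proof (rule prime_avoid[OF N I])
    show "1 \<in> range (\<lambda>k. x ^ k)" by (force intro: range_eqI[of _ _ 0])
    show "a * b \<in> range (\<lambda>k. x ^ k)" if "a \<in> range (\<lambda>k. x ^ k)" "b \<in> range (\<lambda>k. x ^ k)" for a b
      using that by (auto simp: power_add[symmetric])
    show "I \<inter> range (\<lambda>k. x ^ k) = {}" using x unfolding radical_def by auto
  qed
  then obtain P where "prime_ideal P" "I \<subseteq> P" "P \<inter> range (\<lambda>k. x ^ k) = {}" by blast
  moreover have "x \<in> range (\<lambda>k. x ^ k)" by (force intro: range_eqI[of _ _ 1])
  ultimately show ?thesis by blast
qed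

lemma local_nil:
  assumes N: "noetherian_ring TYPE('a::comm_ring_1)" and K: "is_ideal (K::'a set)"
    and mo: "minover K P" and b: "b \<in> P"
  shows "\<exists>s t. s \<notin> P \<and> s * b ^ t \<in> K"
proof (rule ccontr)
  assume nt: "\<not> ?thesis"
  let ?M = "{s * b ^ t | s t. s \<notin> P}"
  have P: "prime_ideal P" using mo unfolding minover_def by blast
  have "\<exists>T. prime_ideal T \<and> K \<subseteq> T \<and> T \<inter> ?M = {}"
  proof (rule prime_avoid[OF N K])
    show "1 \<in> ?M" using prime_one[OF P] by (intro CollectI exI[of _ 1] exI[of _ 0]) simp
    show "x * y \<in> ?M" if xm: "x \<in> ?M" and ym: "y \<in> ?M" for x y
    proof -
      obtain s t s' t' where "s \<notin> P" "s' \<notin> P" "x = s * b ^ t" "y = s' * b ^ t'" using xm ym by blast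
      then show ?thesis using prime_mult_out[OF P, of s s']
        by (intro CollectI exI[of _ "s * s'"] exI[of _ "t + t'"]) (simp add: power_add algebra_simps)
    qed
    show "K \<inter> ?M = {}" using nt by blast
  qed
  then obtain T where T: "prime_ideal T" "K \<subseteq> T" "T \<inter> ?M = {}" by blast
  have "T \<subseteq> P"
  proof
    fix x assume "x \<in> T"
    moreover have "x \<notin> P \<Longrightarrow> x \<in> ?M" by (intro CollectI exI[of _ x] exI[of _ 0]) simp
    ultimately show "x \<in> P" using T by blast
  qed
  then have "T = P" using mo T unfolding minover_def by blast
  moreover have "b \<in> ?M" using prime_one[OF P] by (intro CollectI exI[of _ 1] exI[of _ 1]) simp
  ultimately show False using T b by blast
qed

definition colon :: "'a::comm_ring_1 set \<Rightarrow> 'a \<Rightarrow> 'a set" where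
  "colon A x = {r. r * x \<in> A}"

lemma colon_ideal: "is_ideal A \<Longrightarrow> is_ideal (colon A x)"
  unfolding colon_def by (rule idealI) (auto simp: algebra_simps intro: ideal_0 ideal_add ideal_mult)

lemma assoc_elem:
  assumes N: "noetherian_ring TYPE('a::comm_ring_1)" and A: "is_ideal (A::'a set)"
    and satA: "sat P A = A" and AU: "A \<noteq> UNIV" and KA: "K \<subseteq> A" and mo: "minover K P"
  shows "\<exists>g. g \<notin> A \<and> (\<forall>p\<in>P. p * g \<in> A)"
proof -
  have P: "prime_ideal P" using mo unfolding minover_def by blast
  let ?F = "{colon A x | x. x \<notin> A}"
  have "?F \<noteq> {}" using AU by blast
  moreover have "\<And>I. I \<in> ?F \<Longrightarrow> is_ideal I" using colon_ideal[OF A] by blast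
  ultimately obtain C where C: "C \<in> ?F" and max: "\<forall>I\<in>?F. C \<subseteq> I \<longrightarrow> I = C"
    using noeth_max[OF N, of ?F] by meson
  then obtain x where x: "x \<notin> A" "C = colon A x" by blast
  have pC: "prime_ideal C" unfolding prime_ideal_def
  proof (intro conjI allI impI)
    show "is_ideal C" using x colon_ideal[OF A] by simp
    show "C \<noteq> UNIV" using x unfolding colon_def by (metis (mono_tags) UNIV_I mem_Collect_eq mult_1)
  next
    fix a b assume ab: "a * b \<in> C"
    show "a \<in> C \<or> b \<in> C"
    proof (rule disjCI)
      assume b: "b \<notin> C"
      then have bx: "b * x \<notin> A" using x unfolding colon_def by auto
      have "C \<subseteq> colon A (b * x)" using x ideal_mult[OF A] unfolding colon_def
        by (auto simp: mult.left_commute) (metis mult.left_commute)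
      then have "colon A (b * x) = C" using max bx by blast
      moreover have "a \<in> colon A (b * x)" using ab x unfolding colon_def by (simp add: mult.assoc)
      ultimately show "a \<in> C" by simp
    qed
  qed
  have "C \<subseteq> P"
  proof
    fix r assume "r \<in> C"
    then have "r * x \<in> A" using x unfolding colon_def by simp
    then show "r \<in> P" using satA x unfolding sat_def by blast
  qed
  moreover have "K \<subseteq> C" using KA x ideal_mult2[OF A] unfolding colon_def by blast
  ultimately have "C = P" using mo pC unfolding minover_def by blast
  then show ?thesis using x unfolding colon_def by blast
qed

definition satd :: "'a::comm_ring_1 set \<Rightarrow> 'a set \<Rightarrow> bool" where
  "satd P I \<longleftrightarrow> is_ideal I \<and> sat P I = I"

inductive fl :: "'a::comm_ring_1 set \<Rightarrow> 'a set \<Rightarrow> 'a set \<Rightarrow> bool" for P where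
  fl_refl: "fl P A A"
| fl_step: "fl P A B \<Longrightarrow> (\<forall>p\<in>P. p * g \<in> B) \<Longrightarrow> fl P A (sat P (addel B g))"

context fixes P :: "'a::comm_ring_1 set" assumes P: "prime_ideal P"
begin

lemma satd_sat: "is_ideal I \<Longrightarrow> satd P (sat P I)"
  unfolding satd_def using sat_ideal[OF P] sat_sat[OF P] by blast

lemma satd_Int: "satd P I \<Longrightarrow> satd P J \<Longrightarrow> satd P (I \<inter> J)"
  unfolding satd_def using ideal_Int sat_mono[OF P, of "I \<inter> J"] sat_sup[OF P, of "I \<inter> J"] by blast

lemma fl_satd: "fl P A B \<Longrightarrow> satd P A \<Longrightarrow> satd P B \<and> A \<subseteq> B"
proof (induction rule: fl.induct)
  case fl_refl then show ?case by simp
next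
  case (fl_step A B g)
  then have B: "satd P B" "A \<subseteq> B" by auto
  have "satd P (sat P (addel B g))" using B addel_ideal satd_sat unfolding satd_def by blast
  moreover have "B \<subseteq> sat P (addel B g)" using addel_sup[of B g] sat_sup[OF P, of "addel B g"] by blast
  ultimately show ?case using B by blast
qed

lemma fl_trans: "fl P B C \<Longrightarrow> fl P A B \<Longrightarrow> fl P A C"
  by (induction rule: fl.induct) (auto intro: fl_step)

lemma simple_step:
  assumes B: "satd P B" and M: "satd P M" and BM: "B \<subseteq> M" and MB': "M \<subseteq> sat P (addel B g)"
    and g: "\<forall>p\<in>P. p * g \<in> B"
  shows "M = B \<or> M = sat P (addel B g)"
proof (cases "g \<in> M")
  case True
  have "addel B g \<subseteq> M" using addel_min[of M B g] M BM True unfolding satd_def by blast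
  then have "sat P (addel B g) \<subseteq> M" using sat_mono[OF P] M unfolding satd_def by blast
  then show ?thesis using MB' by blast
next
  case False
  have iM: "is_ideal M" and sM: "sat P M = M" using M unfolding satd_def by auto
  have iB: "is_ideal B" and sB: "sat P B = B" using B unfolding satd_def by auto
  have "M \<subseteq> B"
  proof
    fix x assume xM: "x \<in> M"
    then obtain s where s: "s \<notin> P" "s * x \<in> addel B g" using MB' unfolding sat_def by blast
    then obtain b r where br: "b \<in> B" "s * x = b + r * g" unfolding addel_def by blast
    show "x \<in> B"
    proof (cases "r \<in> P")
      case True
      then have "s * x \<in> B" using br g ideal_add[OF iB] by simp
      then show ?thesis using s(1) sB unfolding sat_def by blast
    next
      case rP: False
      have "r * g = s * x - b" using br by simp
      also have "\<dots> \<in> M" using ideal_diff[OF iM] ideal_mult[OF iM xM] br BM by blast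
      finally have "g \<in> sat P M" unfolding sat_def using rP by blast
      then show ?thesis using False sM by simp
    qed
  qed
  then show ?thesis using BM by blast
qed

lemma combine:
  assumes I: "satd P I" and I': "satd P I'" and sub: "I' \<subseteq> I" and L: "satd P L"
    and eq1: "I \<inter> L = I' \<inter> L" and eq2: "sat P (isum I L) = sat P (isum I' L)"
  shows "I = I'"
proof
  show "I \<subseteq> I'"
  proof
    fix x assume x: "x \<in> I"
    have "x \<in> sat P (isum I L)" using x isum_sup1[of L I] sat_sup[OF P] L unfolding satd_def by blast
    then obtain s where s: "s \<notin> P" "s * x \<in> isum I' L" using eq2 unfolding sat_def by blast
    then obtain i l where il: "i \<in> I'" "l \<in> L" "s * x = i + l" unfolding isum_def by blast
    have "l = s * x - i" using il by simp
    also have "\<dots> \<in> I" using I x il sub ideal_diff ideal_mult unfolding satd_def by blast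
    finally have "l \<in> I'" using il eq1 by blast
    then have "s * x \<in> I'" using il ideal_add[of I' i l] I' unfolding satd_def by simp
    then show "x \<in> I'" using s I' unfolding satd_def sat_def by blast
  qed
qed (rule sub)

lemma fl_chain:
  "fl P A B \<Longrightarrow> satd P A \<Longrightarrow> (\<forall>n. satd P (I n) \<and> A \<subseteq> I n \<and> I n \<subseteq> B \<and> I (Suc n) \<subseteq> I n)
   \<Longrightarrow> \<exists>m. \<forall>n\<ge>m. I n = I m"
proof (induction arbitrary: I rule: fl.induct)
  case (fl_refl A)
  then have "\<forall>n. I n = A" by blast
  then show ?case by auto
next
  case (fl_step A B g)
  have B: "satd P B" "A \<subseteq> B" using fl_satd[OF fl_step.hyps(1) fl_step.prems(1)] by auto
  let ?B' = "sat P (addel B g)"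
  have B': "satd P ?B'" using B(1) addel_ideal satd_sat unfolding satd_def by blast
  have BB': "B \<subseteq> ?B'" using addel_sup[of B g] sat_sup[OF P, of "addel B g"] by blast
  have ch: "satd P (I n)" "A \<subseteq> I n" "I n \<subseteq> ?B'" "I (Suc n) \<subseteq> I n" for n using fl_step.prems(2) by auto
  have dec: "I n \<subseteq> I m" if "m \<le> n" for m n
    by (rule lift_Suc_antimono_le[of I, OF ch(4) that])
  have chB: "\<forall>n. satd P (I n \<inter> B) \<and> A \<subseteq> I n \<inter> B \<and> I n \<inter> B \<subseteq> B \<and> I (Suc n) \<inter> B \<subseteq> I n \<inter> B"
  proof (intro allI conjI)
    fix n
    show "satd P (I n \<inter> B)" using satd_Int[OF ch(1) B(1)] .
    show "A \<subseteq> I n \<inter> B" using ch(2) B(2) by blast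
    show "I n \<inter> B \<subseteq> B" by blast
    show "I (Suc n) \<inter> B \<subseteq> I n \<inter> B" using ch(4) by blast
  qed
  obtain m1 where m1: "\<forall>n\<ge>m1. I n \<inter> B = I m1 \<inter> B"
    using fl_step.IH[OF fl_step.prems(1) chB] by blast
  define H where "H n = sat P (isum (I n) B)" for n
  have H: "satd P (H n)" "B \<subseteq> H n" "H n \<subseteq> ?B'" for n
  proof -
    have iI: "is_ideal (I n)" and iB: "is_ideal B" using ch(1) B(1) unfolding satd_def by auto
    show "satd P (H n)" unfolding H_def using satd_sat isum_ideal[OF iI iB] by blast
    show "B \<subseteq> H n" unfolding H_def using isum_sup2[OF iI, of B] sat_sup[OF P] by blast
    have iB': "is_ideal ?B'" and sB': "sat P ?B' = ?B'" using B' unfolding satd_def by auto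
    have "isum (I n) B \<subseteq> ?B'" using isum_min[OF iB' ch(3) BB'] .
    then have "H n \<subseteq> sat P ?B'" unfolding H_def by (rule sat_mono[OF P])
    then show "H n \<subseteq> ?B'" using sB' by simp
  qed
  have Hdec: "H n \<subseteq> H m" if "m \<le> n" for m n
  proof -
    have "isum (I n) B \<subseteq> isum (I m) B" using dec[OF that] unfolding isum_def by blast
    then show ?thesis unfolding H_def by (rule sat_mono[OF P])
  qed
  have Hcases: "H n = B \<or> H n = ?B'" for n
    using simple_step[OF B(1) H(1) H(2) H(3) fl_step.hyps(2)] .
  obtain m2 where m2: "\<forall>n\<ge>m2. H n = H m2"
  proof (cases "\<exists>m. H m = B")
    case True
    then obtain m where hm: "H m = B" by blast
    have "\<forall>n\<ge>m. H n = H m"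
    proof (intro allI impI)
      fix n assume "m \<le> n"
      then have "H n \<subseteq> H m" by (rule Hdec)
      then show "H n = H m" using hm H(2)[of n] by blast
    qed
    then show ?thesis by (rule that)
  next
    case False
    then have "\<forall>n. H n = ?B'" using Hcases by blast
    then show ?thesis by (intro that[of 0]) simp
  qed
  let ?m = "max m1 m2"
  have "\<forall>n\<ge>?m. I n = I ?m"
  proof (intro allI impI)
    fix n assume n: "?m \<le> n"
    have n1: "m1 \<le> n" "m1 \<le> ?m" and n2: "m2 \<le> n" "m2 \<le> ?m" using n by auto
    show "I n = I ?m"
    proof (rule sym, rule combine[OF ch(1) ch(1) dec[OF n] B(1)])
      have "I n \<inter> B = I m1 \<inter> B" "I ?m \<inter> B = I m1 \<inter> B"
        using m1[rule_format, OF n1(1)] m1[rule_format, OF n1(2)] by auto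
      then show "I ?m \<inter> B = I n \<inter> B" by simp
      have "H n = H m2" "H ?m = H m2"
        using m2[rule_format, OF n2(1)] m2[rule_format, OF n2(2)] by auto
      then show "sat P (isum (I ?m) B) = sat P (isum (I n) B)" unfolding H_def by simp
    qed
  qed
  then show ?case by blast
qed

lemma fl_exists:
  assumes N: "noetherian_ring TYPE('a)" and K: "is_ideal K" and mo: "minover K P"
  shows "satd P A \<Longrightarrow> sat P K \<subseteq> A \<Longrightarrow> fl P A UNIV"
proof (rule ccontr)
  assume A0: "satd P A" "sat P K \<subseteq> A" "\<not> fl P A UNIV"
  let ?F = "{A. satd P A \<and> sat P K \<subseteq> A \<and> \<not> fl P A UNIV}"
  have ne: "?F \<noteq> {}" using A0 by blast
  have "\<And>I. I \<in> ?F \<Longrightarrow> is_ideal I" unfolding satd_def by blast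
  from noeth_max[OF N ne this] obtain A where A: "A \<in> ?F" and max: "\<forall>I\<in>?F. A \<subseteq> I \<longrightarrow> I = A"
    by blast
  have AU: "A \<noteq> UNIV" using A fl_refl by blast
  have iA: "is_ideal A" and sA: "sat P A = A" using A unfolding satd_def by auto
  have KA: "K \<subseteq> A" using A sat_sup[OF P, of K] by blast
  obtain g where g: "g \<notin> A" "\<forall>p\<in>P. p * g \<in> A" using assoc_elem[OF N iA sA AU KA mo] by blast
  let ?B = "sat P (addel A g)"
  have Bs: "satd P ?B" using iA addel_ideal satd_sat by blast
  have AB: "A \<subseteq> ?B" using addel_sup[of A g] sat_sup[OF P, of "addel A g"] by blast
  have "g \<in> ?B" using addel_el[OF iA, of g] sat_sup[OF P, of "addel A g"] by blast
  then have "?B \<noteq> A" using g by blast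
  then have "?B \<notin> ?F" using max AB by blast
  then have "fl P ?B UNIV" using Bs AB A by blast
  moreover have "fl P A ?B" using fl_step[OF fl_refl g(2)] .
  ultimately have "fl P A UNIV" by (rule fl_trans)
  then show False using A by blast
qed

lemma artinian_chain:
  assumes N: "noetherian_ring TYPE('a)" and K: "is_ideal K" and mo: "minover K P"
    and ch: "\<And>n. satd P (I n)" "\<And>n. K \<subseteq> I n" "\<And>n. I (Suc n) \<subseteq> I n"
  shows "\<exists>m. \<forall>n\<ge>m. I n = I m"
proof -
  have A: "satd P (sat P K)" using satd_sat[OF K] .
  have fl: "fl P (sat P K) UNIV" using fl_exists[OF N K mo A] by blast
  have "sat P K \<subseteq> I n" for n using sat_mono[OF P ch(2)[of n]] ch(1)[of n] unfolding satd_def by simp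
  then show ?thesis using fl_chain[OF fl A, of I] ch by blast
qed

end

definition iprod :: "'a::comm_ring_1 set \<Rightarrow> 'a set \<Rightarrow> 'a set" where
  "iprod I M = ideal_gen {i * m | i m. i \<in> I \<and> m \<in> M}"

fun ipow :: "'a::comm_ring_1 set \<Rightarrow> nat \<Rightarrow> 'a set" where
  "ipow Q 0 = UNIV"
| "ipow Q (Suc n) = iprod Q (ipow Q n)"

lemma iprod_ideal: "is_ideal (iprod I M)" unfolding iprod_def by (rule gen_ideal)
lemma iprod_gen: "i \<in> I \<Longrightarrow> m \<in> M \<Longrightarrow> i * m \<in> iprod I M"
proof -
  assume "i \<in> I" "m \<in> M"
  then have "i * m \<in> {i * m | i m. i \<in> I \<and> m \<in> M}" by blast
  then show "i * m \<in> iprod I M" unfolding iprod_def using gen_sup by (rule subsetD[rotated])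
qed
lemma iprod_sub_right: assumes M: "is_ideal M" shows "iprod I M \<subseteq> M"
  unfolding iprod_def
proof (rule gen_min[OF M])
  show "{i * m |i m. i \<in> I \<and> m \<in> M} \<subseteq> M" using ideal_mult[OF M] by blast
qed
lemma iprod_sub_left: assumes I: "is_ideal I" shows "iprod I M \<subseteq> I"
  unfolding iprod_def
proof (rule gen_min[OF I])
  show "{i * m |i m. i \<in> I \<and> m \<in> M} \<subseteq> I" using ideal_mult2[OF I] by blast
qed
lemma ipow_ideal: "is_ideal (ipow Q n)"
  by (cases n) (simp_all add: ideal_UNIV_is iprod_ideal)
lemma ipow_Suc_sub: "ipow Q (Suc n) \<subseteq> ipow Q n"
  by (simp add: iprod_sub_right ipow_ideal)
lemma pow_in_ipow: assumes x: "x \<in> Q" shows "x ^ n \<in> ipow Q n"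
proof (induction n)
  case 0 show ?case by simp
next
  case (Suc n)
  have "x * x ^ n \<in> iprod Q (ipow Q n)" by (rule iprod_gen[OF x Suc.IH])
  then show ?case by simp
qed

lemma isum_comm_sub: "isum I J \<subseteq> isum J I"
proof
  fix x assume "x \<in> isum I J"
  then obtain i j where "i \<in> I" "j \<in> J" "x = i + j" unfolding isum_def by blast
  then show "x \<in> isum J I" unfolding isum_def
    by (intro CollectI exI[of _ j] exI[of _ i]) (simp add: add.commute)
qed

lemma isum_comm: "isum I J = isum J I"
  using isum_comm_sub by blast

lemma isum_mono: "I \<subseteq> I' \<Longrightarrow> J \<subseteq> J' \<Longrightarrow> isum I J \<subseteq> isum I' J'"
  unfolding isum_def by blast

lemma sat_anti: "Q \<subseteq> P \<Longrightarrow> sat P I \<subseteq> sat Q I"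
  unfolding sat_def by blast

lemma noeth_fg: "noetherian_ring TYPE('a::comm_ring_1) \<Longrightarrow> is_ideal (M::'a set) \<Longrightarrow> \<exists>G. finite G \<and> M = ideal_gen G"
  unfolding noetherian_ring_def by blast

lemma iprod_insert:
  assumes I: "is_ideal I"
  shows "iprod I (ideal_gen (insert g G)) \<subseteq> {i * g + y | i y. i \<in> I \<and> y \<in> iprod I (ideal_gen G)}"
  (is "_ \<subseteq> ?D")
proof -
  have D: "is_ideal ?D"
  proof (rule idealI)
    show "0 \<in> ?D" using ideal_0[OF I] ideal_0[OF iprod_ideal]
      by (intro CollectI exI[of _ 0] exI[of _ 0]) simp
  next
    fix x y assume "x \<in> ?D" "y \<in> ?D"
    then obtain i y1 j y2 where "i \<in> I" "j \<in> I" "y1 \<in> iprod I (ideal_gen G)" "y2 \<in> iprod I (ideal_gen G)"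
      "x = i * g + y1" "y = j * g + y2" by blast
    then have "x + y = (i + j) * g + (y1 + y2)" "i + j \<in> I" "y1 + y2 \<in> iprod I (ideal_gen G)"
      by (simp_all add: algebra_simps ideal_add[OF I] ideal_add[OF iprod_ideal])
    then show "x + y \<in> ?D"
      by (intro CollectI exI[of _ "i + j"] exI[of _ "y1 + y2"]) simp
  next
    fix r x assume "x \<in> ?D"
    then obtain i y1 where "i \<in> I" "y1 \<in> iprod I (ideal_gen G)" "x = i * g + y1" by blast
    moreover have "r * x = (r * i) * g + r * y1" using \<open>x = i * g + y1\<close> by (simp add: algebra_simps)
    moreover have "r * i \<in> I" "r * y1 \<in> iprod I (ideal_gen G)"
      using calculation by (simp_all add: ideal_mult[OF I] ideal_mult[OF iprod_ideal])
    ultimately show "r * x \<in> ?D"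
      by (intro CollectI exI[of _ "r * i"] exI[of _ "r * y1"]) simp
  qed
  have "{i * m | i m. i \<in> I \<and> m \<in> ideal_gen (insert g G)} \<subseteq> ?D"
  proof
    fix z assume "z \<in> {i * m | i m. i \<in> I \<and> m \<in> ideal_gen (insert g G)}"
    then obtain i m where im: "i \<in> I" "m \<in> ideal_gen (insert g G)" "z = i * m" by blast
    then obtain k where k: "m - k * g \<in> ideal_gen G" unfolding gen_insert by blast
    have "z = (i * k) * g + i * (m - k * g)" using im by (simp add: algebra_simps)
    moreover have "i * k \<in> I" using ideal_mult2[OF I im(1)] .
    moreover have "i * (m - k * g) \<in> iprod I (ideal_gen G)" using iprod_gen[OF im(1) k] .
    ultimately show "z \<in> ?D"
      by (intro CollectI exI[of _ "i * k"] exI[of _ "i * (m - k * g)"]) simp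
  qed
  then show ?thesis unfolding iprod_def[of I "ideal_gen (insert g G)"] by (rule gen_min[OF D])
qed

lemma nakayama_gen:
  assumes T: "prime_ideal T" and I: "is_ideal I" and IT: "I \<subseteq> T" and N: "is_ideal N" and G: "finite G"
  shows "ideal_gen G \<subseteq> sat T (isum N (iprod I (ideal_gen G))) \<Longrightarrow> ideal_gen G \<subseteq> sat T N"
  using G
proof (induction G rule: finite_induct)
  case empty
  then show ?case using gen_empty[where 'a='a] ideal_0[OF sat_ideal[OF T N]] by simp
next
  case (insert g G)
  let ?M = "ideal_gen (insert g G)" and ?M' = "ideal_gen G"
  have sN: "is_ideal (sat T N)" using sat_ideal[OF T N] .
  have gM: "g \<in> ?M" by (rule subsetD[OF gen_sup]) simp
  have M'M: "?M' \<subseteq> ?M" by (rule gen_mono) (rule subset_insertI)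
  have "g \<in> sat T (isum N (iprod I ?M))" using insert.prems gM by (rule subsetD)
  then obtain s where s: "s \<notin> T" "s * g \<in> isum N (iprod I ?M)"
    using sat_elD[OF T] by blast
  then obtain n0 z where nz: "n0 \<in> N" "z \<in> iprod I ?M" "s * g = n0 + z" unfolding isum_def by blast
  then obtain i y where iy: "i \<in> I" "y \<in> iprod I ?M'" "z = i * g + y" using iprod_insert[OF I, of g G] by blast
  define u where "u = s - i"
  have u: "u \<notin> T"
  proof
    assume "u \<in> T"
    moreover have "i \<in> T" using IT iy(1) by (rule subsetD)
    ultimately have "u + i \<in> T" by (rule ideal_add[OF prime_is_ideal[OF T]])
    then show False using s(1) unfolding u_def by simp
  qed
  have ug: "u * g = n0 + y" using nz iy unfolding u_def by (simp add: algebra_simps)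
  have "?M' \<subseteq> sat T (isum N (iprod I ?M'))"
  proof
    fix m assume m: "m \<in> ?M'"
    have "m \<in> ?M" using M'M m by (rule subsetD)
    then have "m \<in> sat T (isum N (iprod I ?M))" using insert.prems by (rule rev_subsetD)
    then obtain s' where s': "s' \<notin> T" "s' * m \<in> isum N (iprod I ?M)"
      using sat_elD[OF T] by blast
    then obtain n' z' where nz': "n' \<in> N" "z' \<in> iprod I ?M" "s' * m = n' + z'" unfolding isum_def by blast
    then obtain i' y' where iy': "i' \<in> I" "y' \<in> iprod I ?M'" "z' = i' * g + y'"
      using iprod_insert[OF I, of g G] by blast
    have e1: "s' * m = n' + i' * g + y'" using nz' iy' by (simp add: algebra_simps)
    have "(u * s') * m = u * (s' * m)" by (simp add: ac_simps)
    also have "\<dots> = u * n' + i' * (u * g) + u * y'" unfolding e1 by (simp add: algebra_simps)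
    also have "\<dots> = (u * n' + i' * n0) + (i' * y + u * y')"
      unfolding ug by (simp add: algebra_simps)
    finally have "(u * s') * m = (u * n' + i' * n0) + (i' * y + u * y')" .
    moreover have "u * n' + i' * n0 \<in> N"
      by (rule ideal_add[OF N ideal_mult[OF N nz'(1)] ideal_mult[OF N nz(1)]])
    moreover have "i' * y + u * y' \<in> iprod I ?M'"
      by (rule ideal_add[OF iprod_ideal ideal_mult[OF iprod_ideal iy(2)] ideal_mult[OF iprod_ideal iy'(2)]])
    ultimately have "(u * s') * m \<in> isum N (iprod I ?M')" unfolding isum_def
      by (intro CollectI exI[of _ "u * n' + i' * n0"] exI[of _ "i' * y + u * y'"]) simp
    moreover have "u * s' \<notin> T" using prime_mult_out[OF T u s'(1)] .
    ultimately show "m \<in> sat T (isum N (iprod I ?M'))" by (intro sat_el[OF T])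
  qed
  then have M'N: "?M' \<subseteq> sat T N" by (rule insert.IH)
  have "y \<in> ?M'" using iprod_sub_right[OF gen_ideal] iy(2) by (rule subsetD)
  then have "y \<in> sat T N" using M'N by (rule rev_subsetD)
  moreover have "n0 \<in> sat T N" using sat_sup[OF T] nz(1) by (rule subsetD)
  ultimately have "u * g \<in> sat T N" unfolding ug by (rule ideal_add[OF sN, rotated])
  then have "g \<in> sat T (sat T N)" by (rule sat_el[OF T u])
  then have "g \<in> sat T N" using sat_sat[OF T] by simp
  moreover have "G \<subseteq> sat T N" using gen_sup M'N by (rule subset_trans)
  ultimately have "insert g G \<subseteq> sat T N" by simp
  then show ?case by (rule gen_min[OF sN])
qed

lemma nakayama:
  assumes Nr: "noetherian_ring TYPE('a::comm_ring_1)" and T: "prime_ideal T" and I: "is_ideal I"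
    and IT: "I \<subseteq> T" and N: "is_ideal N" and M: "is_ideal (M::'a set)"
    and h: "M \<subseteq> sat T (isum N (iprod I M))"
  shows "M \<subseteq> sat T N"
proof -
  obtain G where G: "finite G" "M = ideal_gen G" using noeth_fg[OF Nr M] by blast
  show ?thesis using h unfolding G(2) by (rule nakayama_gen[OF T I IT N G(1)])
qed

lemma pit_rel:
  assumes Nr: "noetherian_ring TYPE('a::comm_ring_1)" and J: "is_ideal (J::'a set)"
    and mo: "minover (addel J a) P" and Q: "prime_ideal Q" and JQ: "J \<subseteq> Q" and QP: "Q \<subseteq> P"
    and QneP: "Q \<noteq> P" and Q0: "prime_ideal Q0" and JQ0: "J \<subseteq> Q0" and Q0Q: "Q0 \<subseteq> Q"
  shows "Q0 = Q"
proof -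
  have P: "prime_ideal P" and KP: "addel J a \<subseteq> P" using mo unfolding minover_def by auto
  have K: "is_ideal (addel J a)" using addel_ideal[OF J] .
  have aP: "a \<in> P" using KP addel_el[OF J] by (rule subsetD)
  have aQ: "a \<notin> Q"
  proof
    assume "a \<in> Q"
    then have KQ: "addel J a \<subseteq> Q" by (rule addel_min[OF prime_is_ideal[OF Q] JQ])
    have "\<forall>T. prime_ideal T \<longrightarrow> addel J a \<subseteq> T \<longrightarrow> T \<subseteq> P \<longrightarrow> T = P"
      using mo unfolding minover_def by blast
    then have "Q = P" using Q KQ QP by simp
    then show False using QneP by simp
  qed
  define Qn where "Qn n = sat Q (isum (ipow Q n) J)" for n
  have Qn_ideal: "is_ideal (Qn n)" for n unfolding Qn_def
    by (rule sat_ideal[OF Q isum_ideal[OF ipow_ideal J]])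
  have Qn_sat: "sat Q (Qn n) = Qn n" for n unfolding Qn_def by (rule sat_sat[OF Q])
  have JQn: "J \<subseteq> Qn n" for n unfolding Qn_def
    by (rule subset_trans[OF isum_sup2[OF ipow_ideal] sat_sup[OF Q]])
  have powQn: "ipow Q n \<subseteq> Qn n" for n unfolding Qn_def
    by (rule subset_trans[OF isum_sup1[OF J] sat_sup[OF Q]])
  have Qn_dec: "Qn (Suc n) \<subseteq> Qn n" for n unfolding Qn_def
    by (rule sat_mono[OF Q isum_mono[OF ipow_Suc_sub order_refl]])
  define In where "In n = sat P (isum (Qn n) (addel J a))" for n
  have In_satd: "satd P (In n)" for n unfolding In_def
    by (rule satd_sat[OF P isum_ideal[OF Qn_ideal K]])
  have K_In: "addel J a \<subseteq> In n" for n unfolding In_def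
    by (rule subset_trans[OF isum_sup2[OF Qn_ideal] sat_sup[OF P]])
  have In_dec: "In (Suc n) \<subseteq> In n" for n unfolding In_def
    by (rule sat_mono[OF P isum_mono[OF Qn_dec order_refl]])
  obtain m where m: "\<forall>n\<ge>m. In n = In m"
    using artinian_chain[OF P Nr K mo, where I=In, OF In_satd K_In In_dec] by blast
  have Ieq: "In (Suc m) = In m" by (rule m[rule_format]) simp
  let ?I = "addel {0} a"
  have I: "is_ideal ?I" using addel_ideal[OF ideal_zero_is] .
  have IP: "?I \<subseteq> P"
    by (rule addel_min[OF prime_is_ideal[OF P] _ aP]) (simp add: ideal_0[OF prime_is_ideal[OF P]])
  have aI: "a \<in> ?I" using addel_el[OF ideal_zero_is] .
  have "Qn m \<subseteq> sat P (isum (Qn (Suc m)) (iprod ?I (Qn m)))"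
  proof
    fix x assume x: "x \<in> Qn m"
    have "x \<in> isum (Qn m) (addel J a)" using isum_sup1[OF K, of "Qn m"] x by (rule subsetD)
    then have "x \<in> In m" unfolding In_def using sat_sup[OF P] by (rule subsetD[rotated])
    then have "x \<in> In (Suc m)" using Ieq by simp
    then obtain s where s: "s \<notin> P" "s * x \<in> isum (Qn (Suc m)) (addel J a)" unfolding In_def using sat_elD[OF P] by blast
    then obtain y k where yk: "y \<in> Qn (Suc m)" "k \<in> addel J a" "s * x = y + k" unfolding isum_def by blast
    then obtain j r where jr: "j \<in> J" "k = j + r * a" unfolding addel_def by blast
    have e: "a * r = s * x - y - j" using yk jr by (simp add: algebra_simps)
    have "s * x \<in> Qn m" using ideal_mult[OF Qn_ideal x] .
    moreover have "y \<in> Qn m" using Qn_dec yk(1) by (rule subsetD)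
    moreover have "j \<in> Qn m" using JQn jr(1) by (rule subsetD)
    ultimately have "s * x - y - j \<in> Qn m" by (intro ideal_diff[OF Qn_ideal])
    then have "a * r \<in> Qn m" unfolding e .
    then have "r \<in> sat Q (Qn m)" by (rule sat_el[OF Q aQ])
    then have r: "r \<in> Qn m" using Qn_sat by simp
    have "s * x = (y + j) + a * r" using yk jr by (simp add: algebra_simps)
    moreover have "y + j \<in> Qn (Suc m)" by (rule ideal_add[OF Qn_ideal yk(1) subsetD[OF JQn jr(1)]])
    moreover have "a * r \<in> iprod ?I (Qn m)" using iprod_gen[OF aI r] .
    ultimately have "s * x \<in> isum (Qn (Suc m)) (iprod ?I (Qn m))" unfolding isum_def
      by (intro CollectI exI[of _ "y + j"] exI[of _ "a * r"]) simp
    then show "x \<in> sat P (isum (Qn (Suc m)) (iprod ?I (Qn m)))" by (rule sat_el[OF P s(1)])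
  qed
  then have "Qn m \<subseteq> sat P (Qn (Suc m))"
    by (rule nakayama[OF Nr P I IP Qn_ideal Qn_ideal])
  also have "\<dots> \<subseteq> sat Q (Qn (Suc m))" by (rule sat_anti[OF QP])
  also have "\<dots> = Qn (Suc m)" by (rule Qn_sat)
  finally have Qeq: "Qn m \<subseteq> Qn (Suc m)" .
  have "ipow Q m \<subseteq> sat Q (isum J (iprod Q (ipow Q m)))"
    using powQn[of m] Qeq unfolding Qn_def by (simp add: isum_comm)
  then have "ipow Q m \<subseteq> sat Q J"
    by (rule nakayama[OF Nr Q prime_is_ideal[OF Q] order_refl J ipow_ideal])
  also have "\<dots> \<subseteq> Q0" by (rule sat_in_prime[OF Q Q0 JQ0 Q0Q])
  finally have pQ0: "ipow Q m \<subseteq> Q0" .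
  have "Q \<subseteq> Q0"
  proof
    fix x assume "x \<in> Q"
    then have "x ^ m \<in> Q0" using subsetD[OF pQ0 pow_in_ipow] by blast
    then show "x \<in> Q0" by (rule prime_power[OF Q0])
  qed
  then show ?thesis using Q0Q by (intro subset_antisym)
qed

lemma chain_shift:
  assumes c: "\<forall>i\<le>Suc k. prime_ideal (c i)" "\<forall>i<Suc k. c i \<subset> c (Suc i)"
    and QQ: "c k \<subseteq> Q" and Q: "prime_ideal Q"
  shows "\<forall>i\<le>k. prime_ideal ((c(k := Q)) i)" "\<forall>i<k. (c(k := Q)) i \<subset> (c(k := Q)) (Suc i)"
    "(c(k := Q)) k = Q"
proof -
  show "\<forall>i\<le>k. prime_ideal ((c(k := Q)) i)" using c(1) Q by auto
  show "(c(k := Q)) k = Q" by simp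
  show "\<forall>i<k. (c(k := Q)) i \<subset> (c(k := Q)) (Suc i)"
  proof (intro allI impI)
    fix i assume i: "i < k"
    have ci: "c i \<subset> c (Suc i)" using c(2) i by simp
    show "(c(k := Q)) i \<subset> (c(k := Q)) (Suc i)"
    proof (cases "Suc i = k")
      case True
      then show ?thesis using ci QQ i by auto
    next
      case False
      then show ?thesis using ci i by auto
    qed
  qed
qed

lemma krull_height:
  assumes N: "noetherian_ring TYPE('a::comm_ring_1)"
  shows "finite G \<Longrightarrow> card G \<le> r \<Longrightarrow> minover (ideal_gen (G::'a set)) P
    \<Longrightarrow> (\<forall>i\<le>k. prime_ideal (c i)) \<Longrightarrow> (\<forall>i<k. c i \<subset> c (Suc i)) \<Longrightarrow> c k = P \<Longrightarrow> k \<le> r"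
proof (induction r arbitrary: G P c k)
  case 0
  then have G: "G = {}" by simp
  show ?case
  proof (cases k)
    case 0 then show ?thesis by simp
  next
    case (Suc k')
    have "c k' \<subset> P" using "0.prems"(5,6) Suc by auto
    moreover have "prime_ideal (c k')" using "0.prems"(4) Suc by simp
    moreover have "ideal_gen G \<subseteq> c k'" unfolding G gen_empty using ideal_0[OF prime_is_ideal[OF \<open>prime_ideal (c k')\<close>]] by simp
    ultimately show ?thesis using "0.prems"(3) unfolding minover_def by blast
  qed
next
  case (Suc r)
  note fin = Suc.prems(1) and cardG = Suc.prems(2) and mo = Suc.prems(3)
  have P: "prime_ideal P" and GP: "ideal_gen G \<subseteq> P" using mo unfolding minover_def by auto
  have mo_all: "\<And>T. prime_ideal T \<Longrightarrow> ideal_gen G \<subseteq> T \<Longrightarrow> T \<subseteq> P \<Longrightarrow> T = P"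
    using mo unfolding minover_def by blast
  show ?case
  proof (cases k)
    case 0 then show ?thesis by simp
  next
    case (Suc k')
    have ck': "c k' \<subset> P" using Suc.prems(5,6) Suc by auto
    have pk': "prime_ideal (c k')" using Suc.prems(4) Suc by simp
    let ?F = "{T. prime_ideal T \<and> c k' \<subseteq> T \<and> T \<subseteq> P \<and> T \<noteq> P}"
    have Fne: "?F \<noteq> {}" using pk' ck' by blast
    have Fid: "\<And>T. T \<in> ?F \<Longrightarrow> is_ideal T" using prime_is_ideal by blast
    obtain Q where QF: "Q \<in> ?F" and Qmax: "\<forall>T\<in>?F. Q \<subseteq> T \<longrightarrow> T = Q"
      using noeth_max[OF N Fne Fid] by blast
    have Q: "prime_ideal Q" and ckQ: "c k' \<subseteq> Q" and QP: "Q \<subseteq> P" and QneP: "Q \<noteq> P" using QF by auto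
    have between: "T = Q \<or> T = P" if "prime_ideal T" "Q \<subseteq> T" "T \<subseteq> P" for T
    proof (cases "T = P")
      case False
      then have "T \<in> ?F" using that ckQ by blast
      then show ?thesis using Qmax that(2) by blast
    qed simp
    have "\<not> G \<subseteq> Q"
    proof
      assume "G \<subseteq> Q"
      then have "ideal_gen G \<subseteq> Q" by (rule gen_min[OF prime_is_ideal[OF Q]])
      then have "Q = P" using mo_all[OF Q _ QP] by blast
      then show False using QneP by simp
    qed
    then obtain a1 where a1G: "a1 \<in> G" and a1Q: "a1 \<notin> Q" by blast
    have a1P: "a1 \<in> P" using GP subsetD[OF gen_sup a1G] by blast
    define G0 where "G0 = G - {a1}"
    have finG0: "finite G0" using fin unfolding G0_def by simp
    have cardG0: "card G0 \<le> r" using cardG a1G fin unfolding G0_def by (simp add: card_Diff_singleton)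
    have iQ: "is_ideal Q" using prime_is_ideal[OF Q] .
    have mo1: "minover (addel Q a1) P" unfolding minover_def
    proof (intro conjI allI impI)
      show "prime_ideal P" by fact
      show "addel Q a1 \<subseteq> P" by (rule addel_min[OF prime_is_ideal[OF P] QP a1P])
      fix T assume T: "prime_ideal T" "addel Q a1 \<subseteq> T" "T \<subseteq> P"
      have "Q \<subseteq> T" using addel_sup[of Q a1] T(2) by (rule subset_trans)
      moreover have "a1 \<in> T" using T(2) addel_el[OF iQ] by (rule subsetD)
      ultimately show "T = P" using between[OF T(1) _ T(3)] a1Q by blast
    qed
    have "\<forall>b\<in>G0. \<exists>s t q rr. s \<notin> P \<and> q \<in> Q \<and> s * b ^ t = q + rr * a1"
    proof
      fix b assume b: "b \<in> G0"
      have "b \<in> P" using GP subsetD[OF gen_sup, of b G] b unfolding G0_def by blast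
      then obtain s t where st: "s \<notin> P" "s * b ^ t \<in> addel Q a1"
        using local_nil[OF N addel_ideal[OF iQ] mo1] by blast
      then obtain q rr where "q \<in> Q" "s * b ^ t = q + rr * a1" unfolding addel_def by blast
      then show "\<exists>s t q rr. s \<notin> P \<and> q \<in> Q \<and> s * b ^ t = q + rr * a1" using st(1) by blast
    qed
    then obtain sf tf qf rf where sf: "\<And>b. b \<in> G0 \<Longrightarrow> sf b \<notin> P \<and> qf b \<in> Q \<and> sf b * b ^ tf b = qf b + rf b * a1"
      by metis
    define K' where "K' = ideal_gen (qf ` G0)"
    have iK': "is_ideal K'" unfolding K'_def by (rule gen_ideal)
    have K'Q: "K' \<subseteq> Q" unfolding K'_def by (rule gen_min[OF iQ]) (use sf in blast)
    have mo2: "minover (addel K' a1) P" unfolding minover_def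
    proof (intro conjI allI impI)
      show "prime_ideal P" by fact
      show "addel K' a1 \<subseteq> P" by (rule addel_min[OF prime_is_ideal[OF P] subset_trans[OF K'Q QP] a1P])
      fix T assume T: "prime_ideal T" "addel K' a1 \<subseteq> T" "T \<subseteq> P"
      have a1T: "a1 \<in> T" using T(2) addel_el[OF iK'] by (rule subsetD)
      have K'T: "K' \<subseteq> T" using addel_sup[of K' a1] T(2) by (rule subset_trans)
      have "G \<subseteq> T"
      proof
        fix b assume bG: "b \<in> G"
        show "b \<in> T"
        proof (cases "b = a1")
          case True then show ?thesis using a1T by simp
        next
          case False
          then have b: "b \<in> G0" using bG unfolding G0_def by blast
          have "qf b \<in> K'" unfolding K'_def using b by (intro subsetD[OF gen_sup]) simp
          then have "qf b \<in> T" using K'T by (rule rev_subsetD)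
          then have "qf b + rf b * a1 \<in> T"
            by (rule ideal_add[OF prime_is_ideal[OF T(1)] _ ideal_mult[OF prime_is_ideal[OF T(1)] a1T]])
          then have "sf b * b ^ tf b \<in> T" using sf[OF b] by simp
          moreover have "sf b \<notin> T" using sf[OF b] T(3) by blast
          ultimately have "b ^ tf b \<in> T" using prime_mult[OF T(1)] by blast
          then show ?thesis by (rule prime_power[OF T(1)])
        qed
      qed
      then have "ideal_gen G \<subseteq> T" by (rule gen_min[OF prime_is_ideal[OF T(1)]])
      then show "T = P" using mo_all[OF T(1) _ T(3)] by blast
    qed
    have moQ: "minover K' Q" unfolding minover_def
    proof (intro conjI allI impI)
      show "prime_ideal Q" by fact
      show "K' \<subseteq> Q" by fact
      fix T assume T: "prime_ideal T" "K' \<subseteq> T" "T \<subseteq> Q"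
      show "T = Q" by (rule pit_rel[OF N iK' mo2 Q K'Q QP QneP T])
    qed
    have moQ': "minover (ideal_gen (qf ` G0)) Q" using moQ unfolding K'_def .
    have card2: "card (qf ` G0) \<le> r" using card_image_le[OF finG0, of qf] cardG0 by linarith
    have chain1: "\<forall>i\<le>Suc k'. prime_ideal (c i)" "\<forall>i<Suc k'. c i \<subset> c (Suc i)"
      using Suc.prems(4,5) Suc by auto
    note cs = chain_shift[OF chain1 ckQ Q]
    have "k' \<le> r" by (rule Suc.IH[OF finite_imageI[OF finG0] card2 moQ' cs])
    then show ?thesis using Suc by simp
  qed
qed

lemma height_bound:
  assumes N: "noetherian_ring TYPE('a::comm_ring_1)" and fin: "finite G"
    and mo: "minover (ideal_gen (G::'a set)) P"
  shows "prime_height_mod {0} P \<le> enat (card G)"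
  unfolding prime_height_mod_def
proof (rule Sup_least)
  fix x assume "x \<in> {enat k |k. \<exists>c. (\<forall>i\<le>k. prime_ideal (c i) \<and> {0} \<subseteq> c i) \<and>
      (\<forall>i<k. c i \<subset> c (Suc i)) \<and> c k = P}"
  then obtain k c where x: "x = enat k" and c: "\<forall>i\<le>k. prime_ideal (c i) \<and> {0} \<subseteq> c i"
    "\<forall>i<k. c i \<subset> c (Suc i)" "c k = P" by blast
  have "k \<le> card G" using krull_height[OF N fin order_refl mo, of k c] c by blast
  then show "x \<le> enat (card G)" using x by simp
qed

lemma exists_minover:
  assumes N: "noetherian_ring TYPE('a::comm_ring_1)" and K: "is_ideal (K::'a set)" and KU: "K \<noteq> UNIV"
  shows "\<exists>P. minover K P"
proof -
  have "\<exists>P. prime_ideal P \<and> K \<subseteq> P \<and> P \<inter> {1} = {}"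
  proof (rule prime_avoid[OF N K])
    show "K \<inter> {1} = {}" using KU ideal_UNIV[OF K] by blast
  qed auto
  then obtain P where "prime_ideal P" "K \<subseteq> P" by blast
  then show ?thesis using min_prime_below by blast
qed

context fixes scale :: "'a::comm_ring_1 \<Rightarrow> 'm::ab_group_add \<Rightarrow> 'm" assumes Mo: "module scale"
begin

lemma dual_iff: "f \<in> dual scale \<longleftrightarrow> (\<forall>x y. f (x + y) = f x + f y) \<and> (\<forall>c x. f (scale c x) = c * f x)"
  unfolding dual_def using module_hom_iff[of scale "(*)" f] Mo mult_module by auto

lemma dual_add: "f \<in> dual scale \<Longrightarrow> f (x + y) = f x + f y" using dual_iff by blast
lemma dual_scale: "f \<in> dual scale \<Longrightarrow> f (scale c x) = c * f x" using dual_iff by blast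
lemma dual_zero: "f \<in> dual scale \<Longrightarrow> f 0 = 0"
  using dual_add[of f 0 0] by simp

lemma dual_lin: "f \<in> dual scale \<Longrightarrow> g \<in> dual scale \<Longrightarrow> (\<lambda>z. a * f z + b * g z) \<in> dual scale"
  unfolding dual_iff by (auto simp: algebra_simps)

lemma order_ideal_ideal: "is_ideal (order_ideal scale z)"
proof (rule idealI)
  have "(\<lambda>z. 0) \<in> dual scale" unfolding dual_iff by simp
  then show "0 \<in> order_ideal scale z" unfolding order_ideal_def by force
next
  fix u v assume "u \<in> order_ideal scale z" "v \<in> order_ideal scale z"
  then obtain f g where fg: "f \<in> dual scale" "g \<in> dual scale" "u = f z" "v = g z"
    unfolding order_ideal_def by blast
  have "(\<lambda>w. 1 * f w + 1 * g w) \<in> dual scale" by (rule dual_lin[OF fg(1,2)])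
  then show "u + v \<in> order_ideal scale z" unfolding order_ideal_def using fg(3,4)
    by (intro CollectI exI[of _ "\<lambda>w. 1 * f w + 1 * g w"]) simp
next
  fix r u assume "u \<in> order_ideal scale z"
  then obtain f where f: "f \<in> dual scale" "u = f z" unfolding order_ideal_def by blast
  have "(\<lambda>w. r * f w + 0 * f w) \<in> dual scale" by (rule dual_lin[OF f(1,1)])
  then show "r * u \<in> order_ideal scale z" unfolding order_ideal_def using f(2)
    by (intro CollectI exI[of _ "\<lambda>w. r * f w + 0 * f w"]) simp
qed

lemma quot_order_ideal_ideal: "is_ideal (quot_order_ideal scale y z)"
proof (rule idealI)
  have "(\<lambda>z. 0) \<in> dual scale" unfolding dual_iff by simp
  then show "0 \<in> quot_order_ideal scale y z" unfolding quot_order_ideal_def by force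
next
  fix u v assume "u \<in> quot_order_ideal scale y z" "v \<in> quot_order_ideal scale y z"
  then obtain f g where fg: "f \<in> dual scale" "g \<in> dual scale" "u = f z" "v = g z" "f y = 0" "g y = 0"
    unfolding quot_order_ideal_def by blast
  have "(\<lambda>w. 1 * f w + 1 * g w) \<in> dual scale" by (rule dual_lin[OF fg(1,2)])
  then show "u + v \<in> quot_order_ideal scale y z" unfolding quot_order_ideal_def using fg(3-6)
    by (intro CollectI exI[of _ "\<lambda>w. 1 * f w + 1 * g w"]) simp
next
  fix r u assume "u \<in> quot_order_ideal scale y z"
  then obtain f where f: "f \<in> dual scale" "u = f z" "f y = 0" unfolding quot_order_ideal_def by blast
  have "(\<lambda>w. r * f w + 0 * f w) \<in> dual scale" by (rule dual_lin[OF f(1,1)])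
  then show "r * u \<in> quot_order_ideal scale y z" unfolding quot_order_ideal_def using f(2,3)
    by (intro CollectI exI[of _ "\<lambda>w. r * f w + 0 * f w"]) simp
qed

lemma quot_sub: "quot_order_ideal scale y z \<subseteq> order_ideal scale z"
  unfolding quot_order_ideal_def order_ideal_def by blast

lemma part1:
  assumes N: "noetherian_ring TYPE('a)"
    and H: "height_mod (quot_order_ideal scale y x) (order_ideal scale x) > 1"
  shows "order_ideal scale y \<subseteq> radical (order_ideal scale x)"
proof
  let ?I = "order_ideal scale x" and ?J = "quot_order_ideal scale y x"
  have iI: "is_ideal ?I" by (rule order_ideal_ideal)
  have iJ: "is_ideal ?J" by (rule quot_order_ideal_ideal)
  fix v assume "v \<in> order_ideal scale y"
  then obtain f where f: "f \<in> dual scale" "v = f y" unfolding order_ideal_def by blast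
  show "v \<in> radical ?I"
  proof (rule ccontr)
    assume "v \<notin> radical ?I"
    then obtain P where P: "prime_ideal P" "?I \<subseteq> P" "v \<notin> P" using not_radical_prime[OF N iI] by blast
    let ?a = "f x"
    have aI: "?a \<in> ?I" unfolding order_ideal_def using f(1) by blast
    have "addel ?J ?a \<subseteq> P"
      by (rule addel_min[OF prime_is_ideal[OF P(1)] subset_trans[OF quot_sub P(2)] subsetD[OF P(2) aI]])
    then obtain P' where mo: "minover (addel ?J ?a) P'" and P'P: "P' \<subseteq> P"
      using min_prime_below[OF P(1)] by blast
    have P': "prime_ideal P'" and KP': "addel ?J ?a \<subseteq> P'" using mo unfolding minover_def by auto
    have vP': "v \<notin> P'" using P'P P(3) by blast
    have JP': "?J \<subseteq> P'" using addel_sup KP' by (rule subset_trans)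
    have IP': "?I \<subseteq> P'"
    proof
      fix w assume "w \<in> ?I"
      then obtain g where g: "g \<in> dual scale" "w = g x" unfolding order_ideal_def by blast
      let ?h = "\<lambda>z. v * g z + (- g y) * f z"
      have h: "?h \<in> dual scale" by (rule dual_lin[OF g(1) f(1)])
      have "?h y = 0" using f(2) by (simp add: mult.commute)
      then have "?h x \<in> ?J" unfolding quot_order_ideal_def using h
        by (intro CollectI exI[of _ ?h]) simp
      then have "?h x + g y * ?a \<in> addel ?J ?a" unfolding addel_def by blast
      moreover have "?h x + g y * ?a = v * w" using g(2) by simp
      ultimately have "v * w \<in> P'" using KP' by auto
      then show "w \<in> P'" using vP' prime_mult[OF P'] by blast
    qed
    have "height_mod ?J ?I \<le> prime_height_mod ?J P'"
      unfolding height_mod_def by (rule Inf_lower) (use P' JP' IP' in blast)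
    also have "prime_height_mod ?J P' \<le> 1"
      unfolding prime_height_mod_def
    proof (rule Sup_least)
      fix z assume "z \<in> {enat k |k. \<exists>c. (\<forall>i\<le>k. prime_ideal (c i) \<and> ?J \<subseteq> c i) \<and>
          (\<forall>i<k. c i \<subset> c (Suc i)) \<and> c k = P'}"
      then obtain k c where z: "z = enat k" and c: "\<forall>i\<le>k. prime_ideal (c i) \<and> ?J \<subseteq> c i"
        "\<forall>i<k. c i \<subset> c (Suc i)" "c k = P'" by blast
      have "k \<le> 1"
      proof (rule ccontr)
        assume "\<not> k \<le> 1"
        then obtain k' where k: "k = Suc (Suc k')" by (metis One_nat_def not_less_eq_eq not_less_zero old.nat.exhaust less_Suc_eq_0_disj nat_le_linear)
        have c1: "c k' \<subset> c (Suc k')" "c (Suc k') \<subset> P'" using c(2,3) k by auto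
        have p1: "prime_ideal (c k')" "?J \<subseteq> c k'" "prime_ideal (c (Suc k'))" "?J \<subseteq> c (Suc k')"
          using c(1) k by auto
        have "c k' = c (Suc k')"
          by (rule pit_rel[OF N iJ mo p1(3) p1(4) _ _ p1(1) p1(2)]) (use c1 in auto)
        then show False using c1 by simp
      qed
      then show "z \<le> 1" using z by (simp add: one_enat_def)
    qed
    finally show False using H by simp
  qed
qed


lemma order_sub_trace: "order_ideal scale z \<subseteq> trace_ideal scale"
  unfolding trace_ideal_def using gen_sup by blast

lemma trace_sub_prime:
  assumes span: "module.span scale (ys ` {1..n}) = UNIV" and T: "prime_ideal T"
    and base: "\<And>i. i \<in> {1..n} \<Longrightarrow> order_ideal scale (ys i) \<subseteq> T"
  shows "trace_ideal scale \<subseteq> T"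
  unfolding trace_ideal_def
proof (rule gen_min[OF prime_is_ideal[OF T]])
  show "(\<Union>z. order_ideal scale z) \<subseteq> T"
  proof
    fix v assume "v \<in> (\<Union>z. order_ideal scale z)"
    then obtain z f where f: "f \<in> dual scale" "v = f z" unfolding order_ideal_def by blast
    have zs: "z \<in> module.span scale (ys ` {1..n})" using span by simp
    have "f z \<in> T"
    proof (rule module.span_induct[OF Mo zs, of "\<lambda>z. f z \<in> T"])
      show "module.subspace scale (Collect (\<lambda>z. f z \<in> T))"
        unfolding module.subspace_def[OF Mo]
        using dual_zero[OF f(1)] dual_add[OF f(1)] dual_scale[OF f(1)]
          ideal_0[OF prime_is_ideal[OF T]] ideal_add[OF prime_is_ideal[OF T]] ideal_mult[OF prime_is_ideal[OF T]]
        by simp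
    next
      fix w assume "w \<in> ys ` {1..n}"
      then obtain i where i: "i \<in> {1..n}" "w = ys i" by blast
      have "f w \<in> order_ideal scale (ys i)" unfolding order_ideal_def using f(1) i(2) by blast
      then show "f w \<in> T" using base[OF i(1)] by blast
    qed
    then show "v \<in> T" using f(2) by simp
  qed
qed

lemma radical_mono: "I \<subseteq> J \<Longrightarrow> radical I \<subseteq> radical J"
  unfolding radical_def by blast

lemma part2_rad:
  assumes N: "noetherian_ring TYPE('a)" and span: "module.span scale (ys ` {1..n}) = UNIV"
    and H: "\<forall>i\<in>{1..n}. height_mod (quot_order_ideal scale (ys i) x) (order_ideal scale x) > 1"
  shows "radical (trace_ideal scale) = radical (order_ideal scale x)"
proof
  show "radical (order_ideal scale x) \<subseteq> radical (trace_ideal scale)"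
    by (rule radical_mono[OF order_sub_trace])
  show "radical (trace_ideal scale) \<subseteq> radical (order_ideal scale x)"
  proof
    fix v assume v: "v \<in> radical (trace_ideal scale)"
    show "v \<in> radical (order_ideal scale x)"
    proof (rule ccontr)
      assume "v \<notin> radical (order_ideal scale x)"
      then obtain T where T: "prime_ideal T" "order_ideal scale x \<subseteq> T" "v \<notin> T"
        using not_radical_prime[OF N order_ideal_ideal] by blast
      have "trace_ideal scale \<subseteq> T"
      proof (rule trace_sub_prime[OF span T(1)])
        fix i assume "i \<in> {1..n}"
        then have "order_ideal scale (ys i) \<subseteq> radical (order_ideal scale x)"
          using part1[OF N] H by blast
        also have "\<dots> \<subseteq> T" by (rule radical_sub_prime[OF T(1,2)])
        finally show "order_ideal scale (ys i) \<subseteq> T" .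
      qed
      then have "radical (trace_ideal scale) \<subseteq> T" by (rule radical_sub_prime[OF T(1)])
      then show False using v T(3) by blast
    qed
  qed
qed

lemma part2_height:
  assumes N: "noetherian_ring TYPE('a)"
    and rad: "radical (trace_ideal scale) = radical (order_ideal scale x)"
    and TU: "trace_ideal scale \<noteq> UNIV"
  shows "height (trace_ideal scale) \<le> mu_dual scale"
  unfolding mu_dual_def
proof (rule Inf_greatest)
  fix e assume "e \<in> {enat k |k. \<exists>fs. (\<forall>i<k. fs i \<in> dual scale) \<and>
      (\<forall>g\<in>dual scale. \<exists>r. g = (\<lambda>z. \<Sum>i<k. r i * fs i z))}"
  then obtain k fs where e: "e = enat k" and fs: "\<forall>i<k. fs i \<in> dual scale"
    "\<forall>g\<in>dual scale. \<exists>r. g = (\<lambda>z. \<Sum>i<k. r i * fs i z)" by blast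
  let ?I = "order_ideal scale x"
  define G where "G = (\<lambda>i. fs i x) ` {..<k}"
  have finG: "finite G" unfolding G_def by simp
  have cardG: "card G \<le> k" unfolding G_def using card_image_le[of "{..<k}" "\<lambda>i. fs i x"] by simp
  have GI: "ideal_gen G = ?I"
  proof
    show "ideal_gen G \<subseteq> ?I"
    proof (rule gen_min[OF order_ideal_ideal])
      show "G \<subseteq> ?I" unfolding G_def order_ideal_def using fs(1) by blast
    qed
    show "?I \<subseteq> ideal_gen G"
    proof
      fix w assume "w \<in> ?I"
      then obtain g where g: "g \<in> dual scale" "w = g x" unfolding order_ideal_def by blast
      then obtain r where "g = (\<lambda>z. \<Sum>i<k. r i * fs i z)" using fs(2) by blast
      then have w: "w = (\<Sum>i<k. r i * fs i x)" using g(2) by simp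
      have "(\<Sum>i<k. r i * fs i x) \<in> ideal_gen G"
      proof (rule ideal_sum[OF gen_ideal])
        fix i assume "i \<in> {..<k}"
        then have "fs i x \<in> G" unfolding G_def by blast
        then have "fs i x \<in> ideal_gen G" using gen_sup by blast
        then show "r i * fs i x \<in> ideal_gen G" by (rule ideal_mult[OF gen_ideal])
      qed
      then show "w \<in> ideal_gen G" using w by simp
    qed
  qed
  have IU: "?I \<noteq> UNIV" using order_sub_trace TU by blast
  obtain P where mo: "minover ?I P" using exists_minover[OF N order_ideal_ideal IU] by blast
  have P: "prime_ideal P" and IP: "?I \<subseteq> P" using mo unfolding minover_def by auto
  have "trace_ideal scale \<subseteq> radical (trace_ideal scale)" by (rule radical_sup)
  also have "\<dots> = radical ?I" by (rule rad)
  also have "\<dots> \<subseteq> P" by (rule radical_sub_prime[OF P IP])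
  finally have trP: "trace_ideal scale \<subseteq> P" .
  have "height (trace_ideal scale) \<le> prime_height_mod {0} P"
    unfolding height_def height_mod_def
    by (rule Inf_lower) (use P trP ideal_0[OF prime_is_ideal[OF P]] in blast)
  also have "\<dots> \<le> enat (card G)"
    by (rule height_bound[OF N finG]) (use mo GI in simp)
  also have "\<dots> \<le> e" using cardG e by simp
  finally show "height (trace_ideal scale) \<le> e" .
qed

end

theorem proposition5p1:
  fixes scale :: "'a::comm_ring_1 \<Rightarrow> 'm::ab_group_add \<Rightarrow> 'm"
    and ys :: "nat \<Rightarrow> 'm" and n :: nat and x y :: 'm
  assumes "noetherian_ring TYPE('a)"
    and "module scale"
    and "module.span scale (ys ` {1..n}) = UNIV"
  shows "(height_mod (quot_order_ideal scale y x) (order_ideal scale x) > 1 \<longrightarrow>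
            order_ideal scale y \<subseteq> radical (order_ideal scale x))
       \<and> ((\<forall>i\<in>{1..n}. height_mod (quot_order_ideal scale (ys i) x) (order_ideal scale x) > 1) \<longrightarrow>
            radical (trace_ideal scale) = radical (order_ideal scale x)
            \<and> (trace_ideal scale \<noteq> UNIV \<longrightarrow> height (trace_ideal scale) \<le> mu_dual scale))"
proof (intro conjI impI)
  assume H: "height_mod (quot_order_ideal scale y x) (order_ideal scale x) > 1"
  show "order_ideal scale y \<subseteq> radical (order_ideal scale x)"
    by (rule part1[OF assms(2) assms(1) H])
next
  assume H: "\<forall>i\<in>{1..n}. height_mod (quot_order_ideal scale (ys i) x) (order_ideal scale x) > 1"
  show "radical (trace_ideal scale) = radical (order_ideal scale x)"
    by (rule part2_rad[OF assms(2) assms(1) assms(3) H])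
next
  assume H: "\<forall>i\<in>{1..n}. height_mod (quot_order_ideal scale (ys i) x) (order_ideal scale x) > 1"
    and TU: "trace_ideal scale \<noteq> UNIV"
  show "height (trace_ideal scale) \<le> mu_dual scale"
    by (rule part2_height[OF assms(2) assms(1) part2_rad[OF assms(2) assms(1) assms(3) H] TU])
qed

end
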